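(* Let $\psi:\mathbb{R}^n\to\mathbb{R}$, $\psi(x)=u^Tx$ with $u\in\mathbb{Z}^n$. Let $F\subseteq\mathbb{R}^n$ be an $(n-1)$-dimensional lattice polytope, $v\in\mathbb{Z}^n\setminus\mathrm{aff}(F)$, $P=\mathrm{conv}(F\cup\{v\})$, and let $w$ be an outer normal vector of the facet $F$ of $P$. Assume that for every integer $i$ the maximizer $[P]_i$ is unique. Then \[ \mathrm{face}_w(\Sigma_\psi(P))=\begin{cases}\Sigma_\psi(F) & \text{if } \psi(v)\in\psi(F),\\[2pt] \Sigma_\psi(F)+\sum_{i=\max_{x\in F}\psi(x)}^{\psi(v)-1}[P]_i & \text{if } \psi(v)>\max_{x\in F}\psi(x),\\[2pt] \Sigma_\psi(F)+\sum_{i=\psi(v)}^{\min_{x\in F}\psi(x)-1}[P]_i & \text{if } \psi(v)<\min_{x\in F}\psi(x).\end{cases} \]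
   Context: For a polytope $Q$, $\mathrm{face}_w(Q)=\arg\max_{x\in Q}w^Tx$. For a lattice polytope $Q$ let $\psi_Q=\min_{x\in Q}\psi(x)$ and $\psi^Q=\max_{x\in Q}\psi(x)$ (integers). The fiber polytope is the Minkowski integral $\Sigma_\psi(Q)=\int_{\psi(Q)}(\psi^{-1}(x)\cap Q)\,dx$, which for lattice polytopes equals $\sum_{i=\psi_Q}^{\psi^Q-1}\big(\psi^{-1}(i+\tfrac12)\cap Q\big)$ (Minkowski sum). For $i\in\mathbb{Z}$, $[Q]_i:=\arg\max_{x\in Q\cap\psi^{-1}(i+\frac12)}w^Tx$. *)

theory Defs
  imports "HOL-Analysis.Analysis" "HOL-Library.Set_Algebras"
begin

definition lattice_point :: "real^'n \<Rightarrow> bool" where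
  "lattice_point x \<longleftrightarrow> (\<forall>i. x $ i \<in> \<int>)"

definition lattice_polytope :: "(real^'n) set \<Rightarrow> bool" where
  "lattice_polytope Q \<longleftrightarrow> (\<exists>S. finite S \<and> (\<forall>x\<in>S. lattice_point x) \<and> Q = convex hull S)"

definition face_w :: "real^'n \<Rightarrow> (real^'n) set \<Rightarrow> (real^'n) set" where
  "face_w w Q = {x \<in> Q. \<forall>y\<in>Q. w \<bullet> y \<le> w \<bullet> x}"

definition psi_min :: "real^'n \<Rightarrow> (real^'n) set \<Rightarrow> real" where
  "psi_min u Q = Inf ((\<lambda>x. u \<bullet> x) ` Q)"

definition psi_max :: "real^'n \<Rightarrow> (real^'n) set \<Rightarrow> real" where
  "psi_max u Q = Sup ((\<lambda>x. u \<bullet> x) ` Q)"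

text \<open>Fiber polytope Sigma_psi(Q) = sum_{i = psi_Q}^{psi^Q - 1} (psi^{-1}(i+1/2) \<inter> Q),
  a Minkowski sum (set addition from Set_Algebras).\<close>
definition fiber_polytope :: "real^'n \<Rightarrow> (real^'n) set \<Rightarrow> (real^'n) set" where
  "fiber_polytope u Q =
     (\<Sum>i\<in>{i::int. psi_min u Q \<le> of_int i \<and> of_int i \<le> psi_max u Q - 1}.
        {x \<in> Q. u \<bullet> x = of_int i + 1/2})"

definition bracket :: "real^'n \<Rightarrow> real^'n \<Rightarrow> (real^'n) set \<Rightarrow> int \<Rightarrow> (real^'n) set" where
  "bracket w u Q i = face_w w {x \<in> Q. u \<bullet> x = of_int i + 1/2}"

end

theory Submission
  imports Defs
begin


lemma face_plus:
  fixes A B :: "(real^'n) set"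
  assumes "face_w w A \<noteq> {}" "face_w w B \<noteq> {}"
  shows "face_w w (A + B) = face_w w A + face_w w B"
proof
  obtain a0 where a0: "a0 \<in> A" "\<forall>y\<in>A. w \<bullet> y \<le> w \<bullet> a0" using assms(1) unfolding face_w_def by auto
  obtain b0 where b0: "b0 \<in> B" "\<forall>y\<in>B. w \<bullet> y \<le> w \<bullet> b0" using assms(2) unfolding face_w_def by auto
  show "face_w w (A + B) \<subseteq> face_w w A + face_w w B"
  proof
    fix x assume x: "x \<in> face_w w (A + B)"
    then have xab: "x \<in> A + B" and mx: "\<forall>y\<in>A+B. w \<bullet> y \<le> w \<bullet> x" unfolding face_w_def by auto
    from xab obtain a b where ab: "x = a + b" "a \<in> A" "b \<in> B" by (auto elim: set_plus_elim)
    have "w \<bullet> (a0 + b0) \<le> w \<bullet> x" using mx a0 b0 by auto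
    then have e: "w \<bullet> a0 + w \<bullet> b0 \<le> w \<bullet> a + w \<bullet> b" using ab by (simp add: inner_add_right)
    have "w \<bullet> a \<le> w \<bullet> a0" "w \<bullet> b \<le> w \<bullet> b0" using a0 b0 ab by auto
    with e have "w \<bullet> a = w \<bullet> a0" "w \<bullet> b = w \<bullet> b0" by linarith+
    then have "a \<in> face_w w A" "b \<in> face_w w B" using a0 b0 ab unfolding face_w_def by auto
    then show "x \<in> face_w w A + face_w w B" using ab by auto
  qed
next
  show "face_w w A + face_w w B \<subseteq> face_w w (A + B)"
  proof
    fix x assume "x \<in> face_w w A + face_w w B"
    then obtain a b where ab: "x = a + b" "a \<in> face_w w A" "b \<in> face_w w B" by (auto elim: set_plus_elim)
    show "x \<in> face_w w (A + B)" unfolding face_w_def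
    proof (intro CollectI conjI ballI)
      show "x \<in> A + B" using ab unfolding face_w_def by auto
      fix y assume "y \<in> A + B"
      then obtain a' b' where "y = a' + b'" "a' \<in> A" "b' \<in> B" by (auto elim: set_plus_elim)
      then show "w \<bullet> y \<le> w \<bullet> x" using ab unfolding face_w_def by (auto simp: inner_add_right intro: add_mono)
    qed
  qed
qed

lemma face_sum:
  fixes f :: "int \<Rightarrow> (real^'n) set"
  assumes "finite I" "\<And>i. i \<in> I \<Longrightarrow> face_w w (f i) \<noteq> {}"
  shows "face_w w (\<Sum>i\<in>I. f i) = (\<Sum>i\<in>I. face_w w (f i)) \<and> face_w w (\<Sum>i\<in>I. f i) \<noteq> {}"
  using assms
proof (induction I rule: finite_induct)
  case empty
  then show ?case by (auto simp: face_w_def)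
next
  case (insert x F)
  then have IH: "face_w w (sum f F) = (\<Sum>i\<in>F. face_w w (f i))" "face_w w (sum f F) \<noteq> {}" by auto
  have fx: "face_w w (f x) \<noteq> {}" using insert by auto
  have eq: "face_w w (f x + sum f F) = face_w w (f x) + face_w w (sum f F)"
    using face_plus[OF fx IH(2)] .
  have "face_w w (f x) + face_w w (sum f F) \<noteq> {}"
    using fx IH(2) by auto
  then show ?case using insert eq IH by simp
qed

lemma hull_le_max:
  fixes u :: "real^'n"
  assumes "finite S" "y \<in> convex hull S"
  shows "u \<bullet> y \<le> Max ((\<lambda>x. u \<bullet> x) ` S)"
proof -
  have "convex hull S \<subseteq> {x. u \<bullet> x \<le> Max ((\<lambda>x. u \<bullet> x) ` S)}"
    by (rule hull_minimal) (use assms(1) in \<open>auto intro: convex_halfspace_le\<close>)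
  then show ?thesis using assms by auto
qed

lemma hull_ge_min:
  fixes u :: "real^'n"
  assumes "finite S" "y \<in> convex hull S"
  shows "Min ((\<lambda>x. u \<bullet> x) ` S) \<le> u \<bullet> y"
proof -
  have "convex hull S \<subseteq> {x. Min ((\<lambda>x. u \<bullet> x) ` S) \<le> u \<bullet> x}"
    by (rule hull_minimal) (use assms(1) in \<open>auto intro: convex_halfspace_ge\<close>)
  then show ?thesis using assms by auto
qed

lemma psi_max_hull:
  fixes u :: "real^'n"
  assumes "finite S" "S \<noteq> {}"
  shows "psi_max u (convex hull S) = Max ((\<lambda>x. u \<bullet> x) ` S)"
  unfolding psi_max_def
proof (rule cSup_eq_maximum)
  show "Max ((\<lambda>x. u \<bullet> x) ` S) \<in> (\<lambda>x. u \<bullet> x) ` (convex hull S)"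
    using Max_in[of "(\<lambda>x. u \<bullet> x) ` S"] assms hull_subset[of S convex] by blast
  show "\<And>x. x \<in> (\<lambda>x. u \<bullet> x) ` (convex hull S) \<Longrightarrow> x \<le> Max ((\<lambda>x. u \<bullet> x) ` S)"
    using hull_le_max[OF assms(1)] by auto
qed

lemma psi_min_hull:
  fixes u :: "real^'n"
  assumes "finite S" "S \<noteq> {}"
  shows "psi_min u (convex hull S) = Min ((\<lambda>x. u \<bullet> x) ` S)"
  unfolding psi_min_def
proof (rule cInf_eq_minimum)
  show "Min ((\<lambda>x. u \<bullet> x) ` S) \<in> (\<lambda>x. u \<bullet> x) ` (convex hull S)"
    using Min_in[of "(\<lambda>x. u \<bullet> x) ` S"] assms hull_subset[of S convex] by blast
  show "\<And>x. x \<in> (\<lambda>x. u \<bullet> x) ` (convex hull S) \<Longrightarrow> Min ((\<lambda>x. u \<bullet> x) ` S) \<le> x"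
    using hull_ge_min[OF assms(1)] by auto
qed

lemma slice_nonempty:
  fixes u a b :: "real^'n"
  assumes "convex K" "a \<in> K" "b \<in> K" "u \<bullet> a \<le> c" "c \<le> u \<bullet> b"
  shows "\<exists>x\<in>K. u \<bullet> x = c"
proof (cases "u \<bullet> a = u \<bullet> b")
  case True
  then show ?thesis using assms by (intro bexI[of _ a]) auto
next
  case False
  define t where "t = (c - u \<bullet> a) / (u \<bullet> b - u \<bullet> a)"
  have d: "u \<bullet> b - u \<bullet> a > 0" using False assms by auto
  have t0: "0 \<le> t" "t \<le> 1" unfolding t_def using d assms by (auto simp: field_simps)
  have "(1 - t) *\<^sub>R a + t *\<^sub>R b \<in> K" using assms t0 by (intro convexD) auto
  moreover have "u \<bullet> ((1 - t) *\<^sub>R a + t *\<^sub>R b) = c"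
    using d unfolding t_def by (simp add: inner_add_right algebra_simps) (simp add: field_simps)
  ultimately show ?thesis by blast
qed

lemma face_slice_nonempty:
  fixes u w :: "real^'n"
  assumes "compact K" "\<exists>x\<in>K. u \<bullet> x = c"
  shows "face_w w {x\<in>K. u \<bullet> x = c} \<noteq> {}"
proof -
  have "compact {x\<in>K. u \<bullet> x = c}"
    using compact_Int_closed[OF assms(1) closed_hyperplane[of u c]] by (simp add: Int_def)
  moreover have "{x\<in>K. u \<bullet> x = c} \<noteq> {}" using assms by auto
  moreover have "continuous_on {x\<in>K. u \<bullet> x = c} (\<lambda>x. w \<bullet> x)" by (intro continuous_intros)
  ultimately have "\<exists>x\<in>{x\<in>K. u \<bullet> x = c}. \<forall>y\<in>{x\<in>K. u \<bullet> x = c}. w \<bullet> y \<le> w \<bullet> x"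
    by (rule continuous_attains_sup)
  then show ?thesis unfolding face_w_def by blast
qed

lemma lattice_inner_int:
  assumes "lattice_point u" "lattice_point s"
  shows "u \<bullet> s \<in> \<int>"
  using assms unfolding lattice_point_def inner_vec_def
  by (intro Ints_sum Ints_mult) auto

lemma finite_int_range: "finite {i::int. (a::real) \<le> of_int i \<and> of_int i \<le> (b::real)}"
  by (rule finite_subset[of _ "{ceiling a .. floor b}"]) (auto simp: ceiling_le le_floor_iff)



theorem theorem4p8:
  fixes u v w :: "real^'n" and F P :: "(real^'n) set"
  assumes u_int: "lattice_point u"
    and F_lat: "lattice_polytope F"
    and F_dim: "aff_dim F = int CARD('n) - 1"
    and v_int: "lattice_point v"
    and v_notin: "v \<notin> affine hull F"
    and P_def: "P = convex hull (F \<union> {v})"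
    and w_nz: "w \<noteq> 0"
    and w_facet: "face_w w P = F"
    and unique: "\<And>i::int. \<forall>x\<in>bracket w u P i. \<forall>y\<in>bracket w u P i. x = y"
  shows "(u \<bullet> v \<in> (\<lambda>x. u \<bullet> x) ` F \<longrightarrow>
            face_w w (fiber_polytope u P) = fiber_polytope u F)
       \<and> (u \<bullet> v > psi_max u F \<longrightarrow>
            face_w w (fiber_polytope u P) = fiber_polytope u F +
              (\<Sum>i\<in>{i::int. psi_max u F \<le> of_int i \<and> of_int i \<le> u \<bullet> v - 1}. bracket w u P i))
       \<and> (u \<bullet> v < psi_min u F \<longrightarrow>
            face_w w (fiber_polytope u P) = fiber_polytope u F +
              (\<Sum>i\<in>{i::int. u \<bullet> v \<le> of_int i \<and> of_int i \<le> psi_min u F - 1}. bracket w u P i))"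
proof -
  obtain S where S: "finite S" "\<forall>x\<in>S. lattice_point x" "F = convex hull S"
    using F_lat unfolding lattice_polytope_def by blast
  have "F \<noteq> {}" using F_dim by auto
  then have Sne: "S \<noteq> {}" using S by auto
  define T where "T = insert v S"
  have T: "finite T" "T \<noteq> {}" unfolding T_def using S by auto
  have PT: "P = convex hull T"
    unfolding P_def T_def S(3) using hull_Un_left[of convex S "{v}"] by simp
  define sl where "sl K i = {x\<in>K. u \<bullet> x = of_int i + 1/2}" for K and i :: int
  have fibdef: "fiber_polytope u K = (\<Sum>i\<in>{i::int. psi_min u K \<le> of_int i \<and> of_int i \<le> psi_max u K - 1}. sl K i)" for K
    unfolding fiber_polytope_def sl_def ..
  have gen: "face_w w (sl (convex hull R) i) \<noteq> {}"
    if R: "finite R" "R \<noteq> {}" and i: "psi_min u (convex hull R) \<le> of_int i" "of_int i \<le> psi_max u (convex hull R) - 1" for R i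
  proof -
    have "Min ((\<lambda>x. u \<bullet> x) ` R) \<in> (\<lambda>x. u \<bullet> x) ` R" using R by (intro Min_in) auto
    then obtain a where a: "a \<in> R" "u \<bullet> a = Min ((\<lambda>x. u \<bullet> x) ` R)" by (auto elim!: imageE)
    have "Max ((\<lambda>x. u \<bullet> x) ` R) \<in> (\<lambda>x. u \<bullet> x) ` R" using R by (intro Max_in) auto
    then obtain b where b: "b \<in> R" "u \<bullet> b = Max ((\<lambda>x. u \<bullet> x) ` R)" by (auto elim!: imageE)
    have ab: "a \<in> convex hull R" "b \<in> convex hull R" using a b hull_subset[of R convex] by auto
    have "u \<bullet> a \<le> of_int i + 1/2" using a(2) i(1) psi_min_hull[OF R, of u] by linarith
    moreover have "of_int i + 1/2 \<le> u \<bullet> b" using b(2) i(2) psi_max_hull[OF R, of u] by linarith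
    ultimately have "\<exists>x\<in>convex hull R. u \<bullet> x = of_int i + 1/2"
      using slice_nonempty[OF convex_convex_hull ab] by blast
    then show ?thesis unfolding sl_def
      by (intro face_slice_nonempty compact_convex_hull finite_imp_compact R)
  qed
  have FP: "F \<subseteq> P" using w_facet unfolding face_w_def by auto
  have Fsl: "face_w w (sl P i) = sl F i"
    if i: "psi_min u F \<le> of_int i" "of_int i \<le> psi_max u F - 1" for i
  proof -
    obtain f0 where f0: "f0 \<in> sl F i" using gen[OF S(1) Sne, of i] i S(3) unfolding face_w_def by auto
    have fm: "\<forall>y\<in>P. w \<bullet> y \<le> w \<bullet> x" if "x \<in> F" for x
      using that w_facet unfolding face_w_def by auto
    show ?thesis
    proof
      show "face_w w (sl P i) \<subseteq> sl F i"
      proof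
        fix x assume x: "x \<in> face_w w (sl P i)"
        have "f0 \<in> sl P i" using f0 FP unfolding sl_def by auto
        then have "w \<bullet> f0 \<le> w \<bullet> x" using x unfolding face_w_def by auto
        moreover have "\<forall>y\<in>P. w \<bullet> y \<le> w \<bullet> f0" using fm f0 unfolding sl_def by auto
        ultimately have "x \<in> face_w w P" using x unfolding face_w_def sl_def by force
        then show "x \<in> sl F i" using x w_facet unfolding face_w_def sl_def by auto
      qed
      show "sl F i \<subseteq> face_w w (sl P i)"
        using fm FP unfolding face_w_def sl_def by auto
    qed
  qed
  define fmin where "fmin = Min ((\<lambda>x. u \<bullet> x) ` S)"
  define fmax where "fmax = Max ((\<lambda>x. u \<bullet> x) ` S)"
  have Fmm: "psi_min u F = fmin" "psi_max u F = fmax"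
    unfolding fmin_def fmax_def S(3) using psi_min_hull[OF S(1) Sne] psi_max_hull[OF S(1) Sne] by auto
  have Pmm: "psi_min u P = min (u \<bullet> v) fmin" "psi_max u P = max (u \<bullet> v) fmax"
    unfolding fmin_def fmax_def PT using psi_min_hull[OF T] psi_max_hull[OF T] S(1) Sne
    by (auto simp: T_def)
  have fmin_in: "fmin \<in> (\<lambda>x. u \<bullet> x) ` S" unfolding fmin_def using S(1) Sne by (intro Min_in) auto
  then have fint1: "fmin \<in> \<int>" using S(2) lattice_inner_int[OF u_int] by blast
  have "fmax \<in> (\<lambda>x. u \<bullet> x) ` S" unfolding fmax_def using S(1) Sne by (intro Max_in) auto
  then have fint2: "fmax \<in> \<int>" using S(2) lattice_inner_int[OF u_int] by blast
  note fint = fint1 fint2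
  have fle: "fmin \<le> fmax" unfolding fmax_def using fmin_in S(1) by (intro Max_ge) auto
  define IP where "IP = {i::int. psi_min u P \<le> of_int i \<and> of_int i \<le> psi_max u P - 1}"
  define IF where "IF = {i::int. psi_min u F \<le> of_int i \<and> of_int i \<le> psi_max u F - 1}"
  have fIP: "finite IP" unfolding IP_def by (rule finite_int_range)
  have faceP: "face_w w (fiber_polytope u P) = (\<Sum>i\<in>IP. face_w w (sl P i))"
    unfolding fibdef IP_def[symmetric]
    using face_sum[OF fIP, of w "sl P"] gen[OF T] PT unfolding IP_def by auto
  have sumF: "(\<Sum>i\<in>IF. face_w w (sl P i)) = fiber_polytope u F"
    unfolding fibdef IF_def[symmetric] by (rule sum.cong) (auto simp: IF_def Fsl)
  have bre: "bracket w u P i = face_w w (sl P i)" for i unfolding bracket_def sl_def ..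
  show ?thesis
  proof (intro conjI impI)
    assume "u \<bullet> v \<in> (\<lambda>x. u \<bullet> x) ` F"
    then have "fmin \<le> u \<bullet> v" "u \<bullet> v \<le> fmax"
      using hull_ge_min[OF S(1)] hull_le_max[OF S(1)] S(3) unfolding fmin_def fmax_def by auto
    then have "IP = IF" unfolding IP_def IF_def Pmm Fmm by auto
    then show "face_w w (fiber_polytope u P) = fiber_polytope u F" using faceP sumF by simp
  next
    assume a: "u \<bullet> v > psi_max u F"
    define J where "J = {i::int. psi_max u F \<le> of_int i \<and> of_int i \<le> u \<bullet> v - 1}"
    obtain k where k: "fmax = of_int k" using fint by (auto elim: Ints_cases)
    have "IP = IF \<union> J" unfolding IP_def IF_def J_def Pmm Fmm using a fle k Fmm
      by auto
    moreover have "IF \<inter> J = {}" unfolding IF_def J_def by auto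
    moreover have "finite IF" "finite J" unfolding IF_def J_def by (rule finite_int_range)+
    ultimately have "(\<Sum>i\<in>IP. face_w w (sl P i)) = (\<Sum>i\<in>IF. face_w w (sl P i)) + (\<Sum>i\<in>J. face_w w (sl P i))"
      by (simp add: sum.union_disjoint)
    then show "face_w w (fiber_polytope u P) = fiber_polytope u F + (\<Sum>i\<in>{i::int. psi_max u F \<le> of_int i \<and> of_int i \<le> u \<bullet> v - 1}. bracket w u P i)"
      using faceP sumF unfolding J_def bre by simp
  next
    assume a: "u \<bullet> v < psi_min u F"
    define J where "J = {i::int. u \<bullet> v \<le> of_int i \<and> of_int i \<le> psi_min u F - 1}"
    obtain k where k: "fmin = of_int k" using fint by (auto elim: Ints_cases)
    have "IP = IF \<union> J" unfolding IP_def IF_def J_def Pmm Fmm using a fle k Fmm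
      by auto
    moreover have "IF \<inter> J = {}" unfolding IF_def J_def by auto
    moreover have "finite IF" "finite J" unfolding IF_def J_def by (rule finite_int_range)+
    ultimately have "(\<Sum>i\<in>IP. face_w w (sl P i)) = (\<Sum>i\<in>IF. face_w w (sl P i)) + (\<Sum>i\<in>J. face_w w (sl P i))"
      by (simp add: sum.union_disjoint)
    then show "face_w w (fiber_polytope u P) = fiber_polytope u F + (\<Sum>i\<in>{i::int. u \<bullet> v \<le> of_int i \<and> of_int i \<le> psi_min u F - 1}. bracket w u P i)"
      using faceP sumF unfolding J_def bre by simp
  qed
qed
end
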